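(* Let $d\ge 1$, $\eta>0$, $\sigma>1$, $\alpha\ge 1$, and let $0<\epsilon<\eta$. Consider the distribution $\mathcal{D}$ on $\mathbb{R}^d\times\{-1,+1\}$ given by $y$ uniform on $\{-1,+1\}$, $\bm{\mu}=(\eta,\dots,\eta)\in\mathbb{R}^d$, and $\bm{x}\mid y=+1\sim\mathcal{N}(\bm{\mu},\sigma^2 I)$, $\bm{x}\mid y=-1\sim\mathcal{N}(-\alpha\bm{\mu}, I)$. Consider linear classifiers $f(\bm{x})=\operatorname{sign}(\bm{w}^\top\bm{x}+b)$ with $\bm{w}\in\mathbb{R}^d$, $\|\bm{w}\|_2=1$, $b\in\mathbb{R}$. Define the standard error $\mathcal{R}_{nat}(f)=\Pr(f(\bm{x})\neq y)$, the robust error $\mathcal{R}_{rob}(f)=\Pr(\exists\,\bm{\delta},\ \|\bm{\delta}\|_\infty\le\epsilon:\ f(\bm{x}+\bm{\delta})\neq y)$, and the class-conditional errors $\mathcal{R}_{nat}(f\mid y)$, $\mathcal{R}_{rob}(f\mid y)$ obtained by conditioning on the label. Let $f_{nat}$ minimize $\mathcal{R}_{nat}$ and $f_{rob}$ minimize $\mathcal{R}_{rob}$ over $(\bm{w},b)$, and let $A=\frac{2\sqrt{d}\,\sigma}{\sigma^2-1}>0$. Then $$\mathcal{R}_{nat}(f_{nat}\mid +1)=\Pr\Big(\mathcal{N}(0,1)<-A\big(\tfrac{1+\alpha}{2}\eta\big)+\sqrt{\big(\tfrac{A}{\sigma}\big)^2\big(\tfrac{1+\alpha}{2}\eta\big)^2+\tfrac{2\log\sigma}{\sigma^2-1}}\Big),$$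 $$\mathcal{R}_{rob}(f_{rob}\mid +1)=\Pr\Big(\mathcal{N}(0,1)<-A\big(\tfrac{1+\alpha}{2}\eta-\epsilon\big)+\sqrt{\big(\tfrac{A}{\sigma}\big)^2\big(\tfrac{1+\alpha}{2}\eta-\epsilon\big)^2+\tfrac{2\log\sigma}{\sigma^2-1}}\Big),$$ and consequently both $\mathcal{R}_{nat}(f_{nat}\mid +1)$ and $\mathcal{R}_{rob}(f_{rob}\mid +1)$ are monotonically decreasing functions of $\alpha$.
   Context: $\Pr(\mathcal{N}(0,1)<z)$ denotes the standard normal cumulative distribution function evaluated at $z$. $I$ is the $d\times d$ identity matrix. *)

theory Defs
  imports "HOL-Probability.Probability"
begin

definition Phi :: "real \<Rightarrow> real" where
  "Phi z = measure (density lborel std_normal_density) {..<z}"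

text \<open>Isotropic Gaussian N(m, s^2 I) on R^d (d = CARD('n)); s is the standard deviation.\<close>
definition gauss_vec :: "real^'n \<Rightarrow> real \<Rightarrow> (real^'n) measure" where
  "gauss_vec m s = density lborel (\<lambda>x. \<Prod>i\<in>UNIV. normal_density (m$i) s (x$i))"

definition clf :: "real^'n \<Rightarrow> real \<Rightarrow> real^'n \<Rightarrow> real" where
  "clf w b x = sgn (w \<bullet> x + b)"

definition muv :: "real \<Rightarrow> real^'n" where
  "muv eta = (\<chi> i. eta)"

definition cond_dist :: "real \<Rightarrow> real \<Rightarrow> real \<Rightarrow> real \<Rightarrow> (real^'n) measure" where
  "cond_dist eta sg alpha y =
     (if y = 1 then gauss_vec (muv eta) sg else gauss_vec (- (alpha *\<^sub>R muv eta)) 1)"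

definition nat_err_cond :: "real \<Rightarrow> real \<Rightarrow> real \<Rightarrow> real^'n \<Rightarrow> real \<Rightarrow> real \<Rightarrow> real" where
  "nat_err_cond eta sg alpha w b y =
     measure (cond_dist eta sg alpha y) {x. clf w b x \<noteq> y}"

definition rob_err_cond :: "real \<Rightarrow> real \<Rightarrow> real \<Rightarrow> real \<Rightarrow> real^'n \<Rightarrow> real \<Rightarrow> real \<Rightarrow> real" where
  "rob_err_cond eta sg alpha eps w b y =
     measure (cond_dist eta sg alpha y)
       {x. \<exists>\<delta>::real^'n. infnorm \<delta> \<le> eps \<and> clf w b (x + \<delta>) \<noteq> y}"

definition R_nat :: "real \<Rightarrow> real \<Rightarrow> real \<Rightarrow> real^'n \<Rightarrow> real \<Rightarrow> real" where
  "R_nat eta sg alpha w b =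
     1/2 * nat_err_cond eta sg alpha w b 1 + 1/2 * nat_err_cond eta sg alpha w b (-1)"

definition R_rob :: "real \<Rightarrow> real \<Rightarrow> real \<Rightarrow> real \<Rightarrow> real^'n \<Rightarrow> real \<Rightarrow> real" where
  "R_rob eta sg alpha eps w b =
     1/2 * rob_err_cond eta sg alpha eps w b 1 + 1/2 * rob_err_cond eta sg alpha eps w b (-1)"

definition nat_opt :: "real \<Rightarrow> real \<Rightarrow> real \<Rightarrow> real^'n \<Rightarrow> real \<Rightarrow> bool" where
  "nat_opt eta sg alpha w b \<longleftrightarrow> norm w = 1 \<and>
     (\<forall>(w'::real^'n) b'. norm w' = 1 \<longrightarrow> R_nat eta sg alpha w b \<le> R_nat eta sg alpha w' b')"

definition rob_opt :: "real \<Rightarrow> real \<Rightarrow> real \<Rightarrow> real \<Rightarrow> real^'n \<Rightarrow> real \<Rightarrow> bool" where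
  "rob_opt eta sg alpha eps w b \<longleftrightarrow> norm w = 1 \<and>
     (\<forall>(w'::real^'n) b'. norm w' = 1 \<longrightarrow> R_rob eta sg alpha eps w b \<le> R_rob eta sg alpha eps w' b')"

end

theory Submission
  imports Defs
begin


lemma V_meas[measurable]: "(\<lambda>f::'n::finite\<Rightarrow>real. \<chi> i. f i) \<in> (PiM UNIV (\<lambda>_::'n. (borel::real measure))) \<rightarrow>\<^sub>M (borel :: (real^'n) measure)"
proof (rule borel_measurable_euclidean_space[THEN iffD2], intro ballI)
  fix b :: "real^'n" assume "b \<in> Basis"
  then obtain i where b: "b = axis i 1" by (auto simp: Basis_vec_def)
  have "(\<lambda>f::'n\<Rightarrow>real. (\<chi> i. f i) \<bullet> b) = (\<lambda>f. f i)"
    by (simp add: b inner_axis)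
  then show "(\<lambda>f::'n\<Rightarrow>real. (\<chi> i. f i) \<bullet> b) \<in> borel_measurable (PiM UNIV (\<lambda>_::'n. (borel::real measure)))"
    by simp
qed

lemma lborel_vec: "(lborel :: (real^'n::finite) measure) = distr (PiM UNIV (\<lambda>_. lborel)) borel (\<lambda>f. \<chi> i. f i)"
proof (rule lborel_eqI)
  interpret product_sigma_finite "\<lambda>_::'n. (lborel::real measure)" by standard
  fix l u :: "real^'n" assume le: "\<And>b. b \<in> Basis \<Longrightarrow> l \<bullet> b \<le> u \<bullet> b"
  have le': "l$i \<le> u$i" for i using le[of "axis i 1"] by (auto simp: Basis_vec_def inner_axis)
  have meas: "(\<lambda>f::'n\<Rightarrow>real. \<chi> i. f i) \<in> (PiM UNIV (\<lambda>_::'n. (lborel::real measure))) \<rightarrow>\<^sub>M (borel :: (real^'n) measure)"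
    by measurable
  have pre: "(\<lambda>f. \<chi> i. f i) -` box l u \<inter> space (PiM UNIV (\<lambda>_. lborel)) = PiE UNIV (\<lambda>i. {l$i<..<u$i})"
    by (simp add: mem_box_cart space_PiM set_eq_iff PiE_iff)
  have "emeasure (distr (PiM UNIV (\<lambda>_. lborel)) borel (\<lambda>f. \<chi> i. f i)) (box l u)
      = emeasure (PiM UNIV (\<lambda>_. lborel)) (PiE UNIV (\<lambda>i. {l$i<..<u$i}))"
    using meas by (simp add: emeasure_distr pre)
  also have "\<dots> = (\<Prod>i\<in>UNIV. ennreal (u$i - l$i))"
    by (subst emeasure_PiM) (auto simp: le')
  also have "\<dots> = ennreal (\<Prod>i\<in>UNIV. (u$i - l$i))"
    by (simp add: prod_ennreal le')
  also have "(\<Prod>i\<in>UNIV. (u$i - l$i)) = (\<Prod>b\<in>Basis. (u - l) \<bullet> b)"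
  proof -
    have "(\<Prod>b\<in>Basis. (u - l) \<bullet> b) = (\<Prod>b\<in>(\<lambda>i. axis i (1::real)) ` UNIV. (u - l) \<bullet> b)"
      by (simp add: Basis_vec_def) (metis UNION_singleton_eq_range)
    also have "\<dots> = (\<Prod>i\<in>UNIV. (u - l) \<bullet> axis i 1)"
      by (subst prod.reindex) (auto simp: inj_on_def axis_eq_axis)
    finally show ?thesis by (simp add: inner_axis)
  qed
  finally show "emeasure (distr (PiM UNIV (\<lambda>_. lborel)) borel (\<lambda>f. \<chi> i. f i)) (box l u) = (\<Prod>b\<in>Basis. (u - l) \<bullet> b)" .
qed simp



definition NN :: "real^'n \<Rightarrow> real \<Rightarrow> 'n \<Rightarrow> real measure" where
  "NN m s i = density lborel (normal_density (m$i) s)"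

lemma PiM_NN: assumes s: "s > 0" shows "density (PiM UNIV (\<lambda>_::'n::finite. lborel)) (\<lambda>f. \<Prod>i\<in>UNIV. ennreal (normal_density (m$i) s (f i)))
   = PiM UNIV (NN m s)"
proof -
  interpret N: prob_space "NN m s i" for i unfolding NN_def using s by (rule prob_space_normal_density)
  interpret P: product_prob_space "NN m s" UNIV ..
  interpret L: product_sigma_finite "\<lambda>_::'n. (lborel::real measure)" by standard
  have setsN[simp]: "sets (NN m s i) = sets borel" for i by (simp add: NN_def)
  show ?thesis
  proof (rule P.PiM_eqI)
    show "sets (density (PiM UNIV (\<lambda>_::'n::finite. lborel)) (\<lambda>f. \<Prod>i\<in>UNIV. ennreal (normal_density (m$i) s (f i))))
      = sets (PiM UNIV (NN m s))"
      unfolding sets_density by (rule sets_PiM_cong[OF refl]) (simp add: NN_def)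
    fix A assume A: "\<And>i. i \<in> UNIV \<Longrightarrow> A i \<in> sets (NN m s i)"
    then have Ab[measurable]: "A i \<in> sets borel" for i by simp
    have PiE_meas: "PiE UNIV A \<in> sets (PiM UNIV (\<lambda>_::'n. lborel))"
      by (rule sets_PiM_I_finite) auto
    have "emeasure (density (PiM UNIV (\<lambda>_::'n::finite. lborel)) (\<lambda>f. \<Prod>i\<in>UNIV. ennreal (normal_density (m$i) s (f i)))) (PiE UNIV A)
       = (\<integral>\<^sup>+ f. (\<Prod>i\<in>UNIV. ennreal (normal_density (m$i) s (f i))) * indicator (PiE UNIV A) f \<partial>PiM UNIV (\<lambda>_. lborel))"
      using PiE_meas by (simp add: emeasure_density)
    also have "\<dots> = (\<integral>\<^sup>+ f. (\<Prod>i\<in>UNIV. ennreal (normal_density (m$i) s (f i)) * indicator (A i) (f i)) \<partial>PiM UNIV (\<lambda>_. lborel))"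
      by (intro nn_integral_cong) (auto simp: indicator_def prod.distrib PiE_iff space_PiM)
    also have "\<dots> = (\<Prod>i\<in>UNIV. (\<integral>\<^sup>+ x. ennreal (normal_density (m$i) s x) * indicator (A i) x \<partial>lborel))"
      by (rule L.product_nn_integral_prod) auto
    also have "\<dots> = (\<Prod>i\<in>UNIV. emeasure (NN m s i) (A i))"
      by (simp add: NN_def emeasure_density)
    finally show "emeasure (density (PiM UNIV (\<lambda>_::'n::finite. lborel)) (\<lambda>f. \<Prod>i\<in>UNIV. ennreal (normal_density (m$i) s (f i)))) (PiE UNIV A)
       = (\<Prod>i\<in>UNIV. emeasure (NN m s i) (A i))" .
  qed simp
qed

lemma gauss_vec_distr: assumes s: "s > 0" shows "gauss_vec m s = distr (PiM UNIV (NN m s)) borel (\<lambda>f::'n::finite\<Rightarrow>real. \<chi> i. f i)"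
proof -
  have "gauss_vec m s = density (distr (PiM UNIV (\<lambda>_::'n. lborel)) borel (\<lambda>f::'n\<Rightarrow>real. \<chi> i. f i))
          (\<lambda>x. ennreal (\<Prod>i\<in>UNIV. normal_density (m$i) s (x$i)))"
    unfolding gauss_vec_def by (simp add: lborel_vec[symmetric])
  also have "\<dots> = distr (density (PiM UNIV (\<lambda>_::'n. lborel)) (\<lambda>f. ennreal (\<Prod>i\<in>UNIV. normal_density (m$i) s (f i)))) borel (\<lambda>f::'n\<Rightarrow>real. \<chi> i. f i)"
    by (subst density_distr) auto
  also have "(\<lambda>f. ennreal (\<Prod>i\<in>UNIV. normal_density (m$i) s (f i))) = (\<lambda>f. \<Prod>i\<in>UNIV. ennreal (normal_density (m$i) s (f i)))"
    by (simp add: prod_ennreal)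
  finally show ?thesis by (simp add: PiM_NN s)
qed



lemma sets_NN[simp, measurable_cong]: "sets (NN m s i) = sets borel"
  by (simp add: NN_def)

lemma norm1_sum: "norm (w::real^'n::finite) = 1 \<Longrightarrow> (\<Sum>i\<in>UNIV. (w$i)\<^sup>2) = 1"
proof -
  assume "norm w = 1"
  then have "w \<bullet> w = 1" by (metis norm_eq_sqrt_inner real_sqrt_eq_1_iff)
  then show ?thesis by (simp add: inner_vec_def power2_eq_square)
qed

lemma dist_lin:
  fixes w m :: "real^'n::finite"
  assumes s: "s > 0" and w: "norm w = 1"
  shows "distributed (PiM UNIV (NN m s)) lborel (\<lambda>f. \<Sum>i\<in>UNIV. w$i * f i) (normal_density (w \<bullet> m) s)"
proof -
  interpret N: prob_space "NN m s i" for i unfolding NN_def using s by (rule prob_space_normal_density)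
  interpret P: product_prob_space "NN m s" UNIV ..
  let ?P = "PiM UNIV (NN m s)"
  have ind0: "P.indep_vars (NN m s) (\<lambda>i f. f i) UNIV"
  proof (subst P.indep_vars_iff_distr_eq_PiM)
    show "distr ?P (PiM UNIV (NN m s)) (\<lambda>x. \<lambda>i\<in>UNIV. x i) = PiM UNIV (\<lambda>i. distr ?P (NN m s i) (\<lambda>f. f i))"
    proof -
      have "distr ?P (PiM UNIV (NN m s)) (\<lambda>x. \<lambda>i\<in>UNIV. x i) = distr ?P ?P (\<lambda>x. x)"
        by (intro distr_cong) auto
      also have "\<dots> = ?P" by simp
      also have "\<dots> = PiM UNIV (\<lambda>i. distr ?P (NN m s i) (\<lambda>f. f i))"
        by (intro PiM_cong refl) (simp add: P.PiM_component)
      finally show ?thesis .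
    qed
  qed auto
  define I where "I = {i. w$i \<noteq> 0}"
  have "I \<noteq> {}"
  proof
    assume "I = {}"
    then have "w = 0" by (auto simp: I_def vec_eq_iff)
    with w show False by simp
  qed
  have ind: "P.indep_vars (\<lambda>_. borel) (\<lambda>i f. w$i * f i) I"
    using P.indep_vars_compose2[OF P.indep_vars_subset[OF ind0, of I], where Y="\<lambda>i x. w$i * x" and N="\<lambda>_. borel"]
    by auto
  have di: "distributed ?P lborel (\<lambda>f. f i) (normal_density (m$i) s)" for i
  proof -
    have "distr ?P lborel (\<lambda>f. f i) = distr ?P (NN m s i) (\<lambda>f. f i)"
      by (intro distr_cong) auto
    also have "\<dots> = NN m s i" by (simp add: P.PiM_component)
    finally show ?thesis unfolding distributed_def NN_def by auto
  qed
  have dwi: "distributed ?P lborel (\<lambda>f. w$i * f i) (normal_density (w$i * m$i) (\<bar>w$i\<bar> * s))" if "i \<in> I" for i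
    using P.normal_density_affine[OF di s, of "w$i" 0] that by (simp add: I_def)
  have "distributed ?P lborel (\<lambda>f. \<Sum>i\<in>I. w$i * f i) (normal_density (\<Sum>i\<in>I. w$i * m$i) (sqrt (\<Sum>i\<in>I. (\<bar>w$i\<bar> * s)\<^sup>2)))"
    by (rule P.sum_indep_normal[OF _ \<open>I \<noteq> {}\<close> ind _ dwi]) (auto simp: I_def s)
  moreover have "(\<lambda>f. \<Sum>i\<in>I. w$i * f i) = (\<lambda>f. \<Sum>i\<in>UNIV. w$i * f i)"
    by (intro ext sum.mono_neutral_left) (auto simp: I_def)
  moreover have "(\<Sum>i\<in>I. w$i * m$i) = w \<bullet> m"
    unfolding inner_vec_def inner_real_def by (intro sum.mono_neutral_left) (auto simp: I_def)
  moreover have "(\<Sum>i\<in>I. (\<bar>w$i\<bar> * s)\<^sup>2) = s\<^sup>2"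
  proof -
    have "(\<Sum>i\<in>I. (\<bar>w$i\<bar> * s)\<^sup>2) = (\<Sum>i\<in>UNIV. (w$i)\<^sup>2) * s\<^sup>2"
      by (simp add: power_mult_distrib sum_distrib_right) (intro sum.mono_neutral_left, auto simp: I_def)
    then show ?thesis using norm1_sum[OF w] by simp
  qed
  ultimately show ?thesis using s by simp
qed



abbreviation "DN \<equiv> density lborel std_normal_density"

lemma DN_prob: "prob_space DN"
  using prob_space_normal_density[of 1 0] by simp

lemma DN_single: "{z} \<in> null_sets DN"
proof -
  have "AE x in lborel. x \<noteq> z" by (rule AE_lborel_singleton)
  then have "AE x in lborel. x \<in> {z} \<longrightarrow> ennreal (std_normal_density x) = 0"
    by eventually_elim auto
  then show ?thesis by (subst null_sets_density_iff) auto
qed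

lemma Phi_le: "Phi z = measure DN {..z}"
proof -
  have "{..z} = {..<z} \<union> {z}" by auto
  then have "measure DN {..z} = measure DN ({..<z} \<union> {z})" by simp
  also have "\<dots> = measure DN {..<z}"
    by (rule measure_Un_null_set) (auto simp: DN_single)
  finally show ?thesis by (simp add: Phi_def)
qed

lemma DN_Icc: "a \<le> b \<Longrightarrow> measure DN {a..b} = integral {a..b} std_normal_density"
proof -
  assume ab: "a \<le> b"
  have int: "(std_normal_density has_integral integral {a..b} std_normal_density) {a..b}"
    by (intro integrable_integral integrable_continuous_interval)
       (auto simp: normal_density_def intro!: continuous_intros)
  have nn: "integral {a..b} std_normal_density \<ge> 0"
    by (intro integral_nonneg integrable_continuous_interval) 
       (auto simp: normal_density_def intro!: continuous_intros)
  have "emeasure DN {a..b} = (\<integral>\<^sup>+x. ennreal (std_normal_density x) * indicator {a..b} x \<partial>lborel)"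
    by (simp add: emeasure_density)
  also have "\<dots> = ennreal (integral {a..b} std_normal_density)"
    by (rule nn_integral_has_integral_lebesgue'[OF _ int]) simp
  finally show ?thesis using nn by (simp add: measure_def)
qed

lemma Phi_split: "a \<le> z \<Longrightarrow> Phi z = Phi a + integral {a..z} std_normal_density"
proof -
  assume az: "a \<le> z"
  interpret prob_space DN by (rule DN_prob)
  have "{..z} = {..<a} \<union> {a..z}" using az by auto
  moreover have "measure DN ({..<a} \<union> {a..z}) = measure DN {..<a} + measure DN {a..z}"
    by (rule finite_measure_Union) auto
  ultimately have "measure DN {..z} = measure DN {..<a} + measure DN {a..z}" by simp
  then show ?thesis using az by (simp add: Phi_le[symmetric] Phi_def DN_Icc)
qed

lemma cont_std: "continuous_on S std_normal_density"
  by (auto simp: normal_density_def intro!: continuous_intros)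

lemma DERIV_Phi: "(Phi has_real_derivative std_normal_density x) (at x)"
proof -
  let ?a = "x - 1" and ?b = "x + 1"
  have "((\<lambda>u. integral {?a..u} std_normal_density) has_real_derivative std_normal_density x) (at x within {?a..?b})"
    by (rule integral_has_real_derivative) (auto simp: cont_std)
  then have d: "((\<lambda>u. integral {?a..u} std_normal_density) has_real_derivative std_normal_density x) (at x)"
    by (simp add: at_within_Icc_at)
  have "((\<lambda>u. Phi ?a + integral {?a..u} std_normal_density) has_real_derivative std_normal_density x) (at x)"
    using DERIV_add[OF DERIV_const d] by simp
  then show ?thesis
    by (rule has_field_derivative_transform_within_open[where S="{?a<..<?b}"]) (auto intro!: Phi_split[symmetric])
qed

lemma std_pos: "std_normal_density x > 0"
  by (simp add: normal_density_pos)

lemma Phi_less: assumes "a < b" shows "Phi a < Phi b"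
  using DERIV_pos_imp_increasing[of a b Phi] DERIV_Phi std_pos assms by blast

lemma Phi_less_iff: "Phi a < Phi b \<longleftrightarrow> a < b"
  by (metis Phi_less linorder_neqE_linordered_idom order_less_asym)

lemma Phi_le_iff: "Phi a \<le> Phi b \<longleftrightarrow> a \<le> b"
  by (meson Phi_less_iff not_le)

lemma Phi_inj: "Phi a = Phi b \<longleftrightarrow> a = b"
  by (metis Phi_less_iff less_irrefl linorder_neqE_linordered_idom)



lemma aux_alg: "(b::real) * c = 1 \<Longrightarrow> s > 0 \<Longrightarrow> k * a = k * b / s * (a * c * s)"
proof -
  assume "b * c = 1" "s > 0"
  then have "k * b / s * (a * c * s) = k * a * (b * c)" by (simp add: field_simps)
  then show ?thesis using \<open>b * c = 1\<close> by simp
qed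

lemma std_shift:
  fixes s u T :: real
  assumes s: "s > 0"
  shows "std_normal_density (s*u - T) = std_normal_density u / s * exp (- ((s*u - T)\<^sup>2 - u\<^sup>2 - 2 * ln s) / 2)"
proof -
  have e: "- ((s*u - T)\<^sup>2 - u\<^sup>2 - 2 * ln s) / 2 = -(s*u-T)\<^sup>2/2 + u\<^sup>2/2 + ln s" by (simp add: field_simps)
  have e2: "exp (- ((s*u - T)\<^sup>2 - u\<^sup>2 - 2 * ln s) / 2) = exp (-(s*u-T)\<^sup>2/2) * exp (u\<^sup>2/2) * s"
    unfolding e using s by (simp only: exp_add exp_ln)
  have bc: "exp (- u\<^sup>2/2) * exp (u\<^sup>2/2) = 1" by (simp add: exp_add[symmetric])
  show ?thesis unfolding std_normal_density_def e2
    by (rule aux_alg[OF bc s])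
qed

lemma aux2: "(k::real) \<noteq> 0 \<Longrightarrow> k * (u - X/k) * (u - Y/k) = (k*u - X) * (k*u - Y) / k"
proof -
  assume k: "k \<noteq> 0"
  have "u - X/k = (k*u - X)/k" "u - Y/k = (k*u - Y)/k" using k by (simp_all add: field_simps)
  then show ?thesis using k by (simp add: power2_eq_square)
qed

lemma quad_fact:
  fixes s T u :: real
  assumes s: "s > 1"
  defines "D \<equiv> sqrt (T\<^sup>2 + 2 * (s\<^sup>2 - 1) * ln s)"
  shows "(s*u - T)\<^sup>2 - u\<^sup>2 - 2 * ln s = (s\<^sup>2 - 1) * (u - (T* s - D)/(s\<^sup>2-1)) * (u - (T* s + D)/(s\<^sup>2-1))"
proof -
  have s2: "s\<^sup>2 - 1 > 0" using s by (simp add: power2_eq_square) (metis less_1_mult mult.commute s)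
  have "ln s > 0" using s by simp
  then have DD: "D\<^sup>2 = T\<^sup>2 + 2 * (s\<^sup>2 - 1) * ln s" unfolding D_def using s2
    by (intro real_sqrt_pow2) (simp add: add_nonneg_nonneg)
  have "(s\<^sup>2 - 1) * (u - (T* s - D)/(s\<^sup>2-1)) * (u - (T* s + D)/(s\<^sup>2-1))
      = ((s\<^sup>2 - 1) * u - (T* s - D)) * ((s\<^sup>2 - 1) * u - (T* s + D)) / (s\<^sup>2 - 1)"
    using s2 by (intro aux2) simp
  also have "((s\<^sup>2 - 1) * u - (T* s - D)) * ((s\<^sup>2 - 1) * u - (T* s + D)) = ((s\<^sup>2 - 1) * u - T* s)\<^sup>2 - D\<^sup>2"
    by (simp add: power2_eq_square algebra_simps)
  also have "\<dots> = (s\<^sup>2 - 1) * ((s*u - T)\<^sup>2 - u\<^sup>2 - 2 * ln s)"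
    unfolding DD by (simp add: power2_eq_square algebra_simps)
  finally show ?thesis using s2 by simp
qed

lemma opt_b:
  fixes p q s b0 :: real
  assumes s: "s > 1"
  and min: "\<And>b. Phi (-(b0+p)/s) + Phi (b0-q) \<le> Phi (-(b+p)/s) + Phi (b-q)"
  shows "(b0+p)/s = ((p+q)* s - sqrt((p+q)\<^sup>2 + 2*(s\<^sup>2-1)*ln s))/(s\<^sup>2-1)"
proof -
  define T where "T = p + q"
  define D where "D = sqrt (T\<^sup>2 + 2 * (s\<^sup>2 - 1) * ln s)"
  define um where "um = (T* s - D)/(s\<^sup>2-1)"
  define up where "up = (T* s + D)/(s\<^sup>2-1)"
  define E where "E u = (s*u - T)\<^sup>2 - u\<^sup>2 - 2 * ln s" for u
  have s0: "s > 0" using s by simp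
  have s2: "s\<^sup>2 - 1 > 0" using s by (simp add: power2_eq_square) (metis less_1_mult mult.commute s)
  have D0: "D \<ge> 0" unfolding D_def using s2 s by (intro real_sqrt_ge_zero add_nonneg_nonneg) auto
  have umup: "um \<le> up" unfolding um_def up_def using s2 D0 by (simp add: divide_right_mono)
  have Eq: "E u = (s\<^sup>2 - 1) * (u - um) * (u - up)" for u
    unfolding E_def um_def up_def D_def using quad_fact[OF s] by simp
  define h where "h b = Phi (-(b+p)/s) + Phi (b-q)" for b
  define h' where "h' b = std_normal_density ((b+p)/s) / s * (exp (- E ((b+p)/s) / 2) - 1)" for b
  have dh: "(h has_real_derivative h' b) (at b)" for b
  proof -
    have d1: "((\<lambda>b. Phi (-(b+p)/s)) has_real_derivative std_normal_density (-(b+p)/s) * (-1/s)) (at b)"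
      apply (rule DERIV_chain2[OF DERIV_Phi]) using s0 by (auto intro!: derivative_eq_intros simp: field_simps)
    have d2: "((\<lambda>b. Phi (b-q)) has_real_derivative std_normal_density (b-q) * 1) (at b)"
      by (rule DERIV_chain2[OF DERIV_Phi]) (auto intro!: derivative_eq_intros)
    have e1: "std_normal_density (-(b+p)/s) = std_normal_density ((b+p)/s)"
      by (simp add: std_normal_density_def power2_eq_square algebra_simps)
    have e2: "b - q = s * ((b+p)/s) - T" using s0 by (simp add: T_def field_simps)
    have e3: "std_normal_density (b-q) = std_normal_density ((b+p)/s) / s * exp (- E ((b+p)/s) / 2)"
      unfolding e2 E_def by (rule std_shift[OF s0])
    show ?thesis using DERIV_add[OF d1 d2] unfolding h_def h'_def e1 e3
      by (simp add: algebra_simps)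
  qed
  have sgn_neg: "h' b < 0" if "E ((b+p)/s) > 0" for b
  proof -
    have "exp (- E ((b+p)/s) / 2) - 1 < 0" using that by simp
    moreover have "std_normal_density ((b+p)/s) / s > 0" using s0 std_pos by simp
    ultimately show ?thesis unfolding h'_def by (intro mult_pos_neg)
  qed
  have hmin: "h b0 \<le> h b" for b unfolding h_def by (rule min)
  have "h' b0 = 0"
    by (rule DERIV_local_min[OF dh, of 1]) (auto simp: hmin)
  then have "exp (- E ((b0+p)/s) / 2) = 1"
    unfolding h'_def using s0 std_pos[of "(b0+p)/s"] by simp
  then have "E ((b0+p)/s) = 0" by simp
  then have "(b0+p)/s = um \<or> (b0+p)/s = up" using s2 by (simp add: Eq)
  moreover have "(b0+p)/s \<noteq> up"
  proof
    assume u0: "(b0+p)/s = up"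
    have "h (b0+1) < h b0"
    proof (rule DERIV_neg_imp_decreasing_open[of b0 "b0+1" h])
      fix x assume "b0 < x" "x < b0 + 1"
      then have "(x+p)/s > (b0+p)/s" using s0 by (intro divide_strict_right_mono) auto
      then have "(x+p)/s > up" using u0 by simp
      then have "E ((x+p)/s) > 0" using umup s2 by (simp add: Eq)
      then show "\<exists>y. DERIV h x :> y \<and> y < 0" using dh sgn_neg by blast
    next
      show "continuous_on {b0..b0+1} h"
        using dh by (intro has_real_derivative_imp_continuous_on) blast
    qed simp
    moreover have "h b0 \<le> h (b0+1)" by (rule hmin)
    ultimately show False by simp
  qed
  ultimately show ?thesis by (simp add: um_def D_def T_def)
qed



lemma halfspace:
  fixes w m :: "real^'n::finite"
  assumes s: "s > 0" and w: "norm w = 1"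
  shows "measure (gauss_vec m s) {x. w \<bullet> x + c \<le> 0} = Phi ((- c - w \<bullet> m) / s)"
proof -
  interpret N: prob_space "NN m s i" for i unfolding NN_def using s by (rule prob_space_normal_density)
  interpret P: product_prob_space "NN m s" UNIV ..
  let ?P = "PiM UNIV (NN m s)"
  let ?Y = "\<lambda>f. \<Sum>i\<in>UNIV. w$i * f i"
  let ?Z = "\<lambda>f. (?Y f - w \<bullet> m) / s"
  have dY: "distributed ?P lborel ?Y (normal_density (w \<bullet> m) s)" by (rule dist_lin[OF s w])
  have dZ: "distributed ?P lborel ?Z std_normal_density"
    using P.normal_standard_normal_convert[OF s] dY by simp
  have setsP: "sets ?P = sets (PiM UNIV (\<lambda>_::'n. (borel::real measure)))"
    by (rule sets_PiM_cong) auto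
  have Vm: "(\<lambda>f::'n\<Rightarrow>real. \<chi> i. f i) \<in> ?P \<rightarrow>\<^sub>M (borel :: (real^'n) measure)"
    using V_meas by (simp add: measurable_cong_sets[OF setsP refl])
  have Hb: "{x::real^'n. w \<bullet> x + c \<le> 0} \<in> sets borel"
    by (intro borel_closed closed_Collect_le continuous_intros)
  have "measure (gauss_vec m s) {x. w \<bullet> x + c \<le> 0}
      = measure ?P ((\<lambda>f. \<chi> i. f i) -` {x. w \<bullet> x + c \<le> 0} \<inter> space ?P)"
    unfolding gauss_vec_distr[OF s] by (rule measure_distr[OF Vm Hb])
  also have "(\<lambda>f. \<chi> i. f i) -` {x. w \<bullet> x + c \<le> 0} \<inter> space ?P = ?Z -` {..(- c - w \<bullet> m) / s} \<inter> space ?P"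
  proof -
    have "w \<bullet> (\<chi> i. f i) + c \<le> 0 \<longleftrightarrow> ?Z f \<le> (- c - w \<bullet> m) / s" for f
    proof -
      have "w \<bullet> (\<chi> i. f i) = ?Y f" by (simp add: inner_vec_def)
      moreover have "?Z f \<le> (- c - w \<bullet> m) / s \<longleftrightarrow> ?Y f - w \<bullet> m \<le> - c - w \<bullet> m"
        using s by (simp add: divide_le_cancel)
      ultimately show ?thesis by linarith
    qed
    then show ?thesis by auto
  qed
  also have "measure ?P (?Z -` {..(- c - w \<bullet> m) / s} \<inter> space ?P) = measure (distr ?P lborel ?Z) {..(- c - w \<bullet> m) / s}"
    by (rule measure_distr[symmetric]) (use dZ in \<open>auto simp: distributed_def\<close>)
  also have "\<dots> = measure DN {..(- c - w \<bullet> m) / s}"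
    using dZ by (simp add: distributed_distr_eq_density)
  finally show ?thesis by (simp add: Phi_le)
qed

lemma halfspace_ge:
  fixes w m :: "real^'n::finite"
  assumes s: "s > 0" and w: "norm w = 1"
  shows "measure (gauss_vec m s) {x. w \<bullet> x + c \<ge> 0} = Phi ((c + w \<bullet> m) / s)"
proof -
  have "{x. w \<bullet> x + c \<ge> 0} = {x. (-w) \<bullet> x + (-c) \<le> 0}" by auto
  moreover have "norm (-w) = 1" using w by simp
  ultimately show ?thesis using halfspace[OF s, of "-w" m "-c"] by simp
qed

definition S1 :: "real^'n::finite \<Rightarrow> real" where "S1 w = (\<Sum>i\<in>UNIV. w$i)"
definition L1 :: "real^'n::finite \<Rightarrow> real" where "L1 w = (\<Sum>i\<in>UNIV. \<bar>w$i\<bar>)"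

lemma inner_muv: "w \<bullet> muv eta = eta * S1 w"
  by (simp add: inner_vec_def muv_def S1_def sum_distrib_left mult.commute)

lemma nat_err_1:
  assumes "sg > 0" "norm w = 1"
  shows "nat_err_cond eta sg alpha w b 1 = Phi ((- b - eta * S1 w) / sg)"
proof -
  have "{x. clf w b x \<noteq> 1} = {x. w \<bullet> x + b \<le> 0}"
    by (auto simp: clf_def sgn_if)
  then show ?thesis using halfspace[OF assms, of "muv eta" b]
    by (simp add: nat_err_cond_def cond_dist_def inner_muv)
qed

lemma nat_err_m1:
  assumes "norm w = 1"
  shows "nat_err_cond eta sg alpha w b (-1) = Phi (b - alpha * (eta * S1 w))"
proof -
  have "{x. clf w b x \<noteq> -1} = {x. w \<bullet> x + b \<ge> 0}"
    by (auto simp: clf_def sgn_if)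
  then show ?thesis using halfspace_ge[OF _ assms, of 1 "- (alpha *\<^sub>R muv eta)" b]
    by (simp add: nat_err_cond_def cond_dist_def inner_muv)
qed

lemma inner_le_L1:
  fixes w d :: "real^'n::finite"
  assumes "infnorm d \<le> e"
  shows "\<bar>w \<bullet> d\<bar> \<le> e * L1 w"
proof -
  have "\<bar>w \<bullet> d\<bar> \<le> (\<Sum>i\<in>UNIV. \<bar>w$i * d$i\<bar>)"
    unfolding inner_vec_def inner_real_def by (rule sum_abs)
  also have "\<dots> \<le> (\<Sum>i\<in>UNIV. \<bar>w$i\<bar> * e)"
  proof (intro sum_mono)
    fix i
    have "\<bar>d$i\<bar> \<le> e" using component_le_infnorm_cart[of d i] assms by simp
    then show "\<bar>w$i * d$i\<bar> \<le> \<bar>w$i\<bar> * e" by (simp add: abs_mult mult_left_mono)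
  qed
  finally show ?thesis by (simp add: L1_def sum_distrib_left mult.commute)
qed

lemma sgn_delta1:
  fixes w :: "real^'n::finite"
  assumes e: "e \<ge> 0" and k: "\<bar>k\<bar> = 1"
  shows "infnorm (\<chi> i. k * e * sgn (w$i)) \<le> e"
proof -
  have "\<bar>k * e * sgn (w$i)\<bar> \<le> e" for i
    using e k by (auto simp: abs_mult abs_sgn_eq)
  then show ?thesis
    unfolding infnorm_cart by (intro cSup_least) auto
qed

lemma sgn_delta2:
  fixes w :: "real^'n::finite"
  shows "w \<bullet> (\<chi> i. k * e * sgn (w$i)) = k * e * L1 w"
proof -
  have eq: "w$i * (k * e * sgn (w$i)) = k * e * \<bar>w$i\<bar>" for i
    by (cases "w$i > 0"; cases "w$i < 0") (auto simp: sgn_if)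
  show ?thesis
    unfolding inner_vec_def L1_def sum_distrib_left inner_real_def
    by (intro sum.cong refl) (simp only: vec_lambda_beta eq)
qed

lemma rob_set_1:
  fixes w :: "real^'n::finite"
  assumes e: "eps \<ge> 0"
  shows "{x. \<exists>\<delta>::real^'n. infnorm \<delta> \<le> eps \<and> clf w b (x + \<delta>) \<noteq> 1} = {x. w \<bullet> x + (b - eps * L1 w) \<le> 0}"
proof safe
  fix x \<delta> :: "real^'n" assume d: "infnorm \<delta> \<le> eps" and c: "clf w b (x + \<delta>) \<noteq> 1"
  have "w \<bullet> (x + \<delta>) + b \<le> 0" using c by (auto simp: clf_def sgn_if split: if_splits)
  moreover have "\<bar>w \<bullet> \<delta>\<bar> \<le> eps * L1 w" by (rule inner_le_L1[OF d])
  ultimately show "w \<bullet> x + (b - eps * L1 w) \<le> 0" by (simp add: inner_add_right)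
next
  fix x :: "real^'n" assume h: "w \<bullet> x + (b - eps * L1 w) \<le> 0"
  let ?d = "\<chi> i. (-1) * eps * sgn (w$i)"
  have "infnorm ?d \<le> eps" using sgn_delta1[OF e, of "-1"] by simp
  moreover have "w \<bullet> ?d = (-1) * eps * L1 w" by (rule sgn_delta2)
  then have "clf w b (x + ?d) \<noteq> 1" using h by (simp add: clf_def inner_add_right sgn_if)
  ultimately show "\<exists>\<delta>::real^'n. infnorm \<delta> \<le> eps \<and> clf w b (x + \<delta>) \<noteq> 1" by blast
qed

lemma rob_set_m1:
  fixes w :: "real^'n::finite"
  assumes e: "eps \<ge> 0"
  shows "{x. \<exists>\<delta>::real^'n. infnorm \<delta> \<le> eps \<and> clf w b (x + \<delta>) \<noteq> -1} = {x. w \<bullet> x + (b + eps * L1 w) \<ge> 0}"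
proof safe
  fix x \<delta> :: "real^'n" assume d: "infnorm \<delta> \<le> eps" and c: "clf w b (x + \<delta>) \<noteq> -1"
  have "w \<bullet> (x + \<delta>) + b \<ge> 0" using c by (auto simp: clf_def sgn_if split: if_splits)
  moreover have "\<bar>w \<bullet> \<delta>\<bar> \<le> eps * L1 w" by (rule inner_le_L1[OF d])
  ultimately show "w \<bullet> x + (b + eps * L1 w) \<ge> 0" by (simp add: inner_add_right)
next
  fix x :: "real^'n" assume h: "w \<bullet> x + (b + eps * L1 w) \<ge> 0"
  let ?d = "\<chi> i. 1 * eps * sgn (w$i)"
  have "infnorm ?d \<le> eps" using sgn_delta1[OF e, of 1] by simp
  moreover have "w \<bullet> ?d = 1 * eps * L1 w" by (rule sgn_delta2)
  then have "clf w b (x + ?d) \<noteq> -1" using h by (simp add: clf_def inner_add_right sgn_if)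
  ultimately show "\<exists>\<delta>::real^'n. infnorm \<delta> \<le> eps \<and> clf w b (x + \<delta>) \<noteq> -1" by blast
qed

lemma rob_err_1:
  assumes "sg > 0" "norm w = 1" "eps \<ge> 0"
  shows "rob_err_cond eta sg alpha eps w b 1 = Phi ((- b + eps * L1 w - eta * S1 w) / sg)"
  using halfspace[OF assms(1,2), of "muv eta" "b - eps * L1 w"] rob_set_1[OF assms(3), of w b]
  by (simp add: rob_err_cond_def cond_dist_def inner_muv)

lemma rob_err_m1:
  assumes "norm w = 1" "eps \<ge> 0"
  shows "rob_err_cond eta sg alpha eps w b (-1) = Phi (b + eps * L1 w - alpha * (eta * S1 w))"
  using halfspace_ge[OF _ assms(1), of 1 "- (alpha *\<^sub>R muv eta)" "b + eps * L1 w"] rob_set_m1[OF assms(2), of w b]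
  by (simp add: rob_err_cond_def cond_dist_def inner_muv)



lemma opt_generic:
  fixes P Q :: "real^'n::finite \<Rightarrow> real"
  assumes s: "s > 1" and w0: "norm w0 = 1" "P w0 = p" "Q w0 = q"
  and bnd: "\<And>w. norm w = 1 \<Longrightarrow> P w \<le> p \<and> Q w \<le> q"
  and w: "norm w = 1"
  and opt: "\<And>w' b'. norm w' = 1 \<Longrightarrow> Phi ((- b - P w)/s) + Phi (b - Q w) \<le> Phi ((- b' - P w')/s) + Phi (b' - Q w')"
  shows "Phi ((- b - P w)/s) = Phi (- (((p+q) * s - sqrt((p+q)\<^sup>2 + 2*(s\<^sup>2-1)*ln s))/(s\<^sup>2-1)))"
proof -
  have s0: "s > 0" using s by simp
  have PQ: "P w = p \<and> Q w = q"
  proof (rule ccontr)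
    assume ne: "\<not> (P w = p \<and> Q w = q)"
    have le1: "(- b - p)/s \<le> (- b - P w)/s" using bnd[OF w] s0 by (intro divide_right_mono) auto
    have le2: "b - q \<le> b - Q w" using bnd[OF w] by simp
    have "Phi ((- b - p)/s) + Phi (b - q) < Phi ((- b - P w)/s) + Phi (b - Q w)"
    proof (cases "P w = p")
      case True
      then have "Q w < q" using ne bnd[OF w] by auto
      then show ?thesis using True by (simp add: Phi_less_iff)
    next
      case False
      then have "P w < p" using bnd[OF w] by auto
      then have "(- b - p)/s < (- b - P w)/s" using s0 by (intro divide_strict_right_mono) auto
      then show ?thesis using le2 by (simp add: Phi_less_iff Phi_le_iff add_less_le_mono)
    qed
    with opt[OF w0(1), of b] w0 show False by simp
  qed
  have min: "Phi (-(b+p)/s) + Phi (b-q) \<le> Phi (-(b'+p)/s) + Phi (b'-q)" for b'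
    using opt[OF w0(1), of b'] PQ w0 by (simp add: minus_add_distrib)
  have "(b+p)/s = ((p+q) * s - sqrt((p+q)\<^sup>2 + 2*(s\<^sup>2-1)*ln s))/(s\<^sup>2-1)"
    by (rule opt_b[OF s min])
  moreover have "(- b - P w)/s = - ((b+p)/s)" using PQ by (simp add: minus_divide_left)
  ultimately show ?thesis by simp
qed

lemma alg_form:
  fixes s r c :: real
  assumes s: "s > 1"
  shows "- (((2*r*c) * s - sqrt((2*r*c)\<^sup>2 + 2*(s\<^sup>2-1)*ln s))/(s\<^sup>2-1))
    = - (2 * r * s / (s\<^sup>2 - 1)) * c + sqrt (((2 * r * s / (s\<^sup>2 - 1)) / s)\<^sup>2 * c\<^sup>2 + 2 * ln s / (s\<^sup>2 - 1))"
proof -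
  have s2: "s\<^sup>2 - 1 > 0" using s by (simp add: power2_eq_square) (metis less_1_mult mult.commute s)
  have s0: "s \<noteq> 0" using s by simp
  have e: "((2 * r * s / (s\<^sup>2 - 1)) / s)\<^sup>2 * c\<^sup>2 + 2 * ln s / (s\<^sup>2 - 1)
      = ((2*r*c)\<^sup>2 + 2*(s\<^sup>2-1)*ln s) / (s\<^sup>2-1)\<^sup>2"
  proof -
    define k where "k = s\<^sup>2 - 1"
    have k: "k > 0" using s2 by (simp add: k_def)
    have 1: "(2 * r * s / k) / s = 2 * r / k" using s0 by simp
    have 2: "(2 * r / k)\<^sup>2 * c\<^sup>2 = (2*r*c)\<^sup>2 / k\<^sup>2" by (simp add: power_divide power_mult_distrib)
    have 3: "2 * ln s / k = 2 * k * ln s / k\<^sup>2" using k by (simp add: power2_eq_square)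
    show ?thesis unfolding k_def[symmetric] 1 2 3 by (simp add: add_divide_distrib)
  qed
  have "sqrt (((2*r*c)\<^sup>2 + 2*(s\<^sup>2-1)*ln s) / (s\<^sup>2-1)\<^sup>2) = sqrt ((2*r*c)\<^sup>2 + 2*(s\<^sup>2-1)*ln s) / (s\<^sup>2-1)"
    using s2 by (simp add: real_sqrt_divide)
  then show ?thesis unfolding e using s2 s0 by (simp add: field_simps)
qed

lemma sqrt_lip:
  fixes x y K :: real
  assumes K: "K \<ge> 0"
  shows "sqrt (x\<^sup>2 + K) \<le> sqrt (y\<^sup>2 + K) + \<bar>x - y\<bar>"
proof (rule real_le_lsqrt)
  show "0 \<le> sqrt (y\<^sup>2 + K) + \<bar>x - y\<bar>" using K by simp
  have yK: "\<bar>y\<bar> \<le> sqrt (y\<^sup>2 + K)" using K by (intro real_le_rsqrt) simp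
  have "y * (x - y) \<le> \<bar>y\<bar> * \<bar>x - y\<bar>" by (metis abs_ge_self abs_mult)
  also have "\<dots> \<le> sqrt (y\<^sup>2 + K) * \<bar>x - y\<bar>" using yK by (simp add: mult_right_mono)
  finally have *: "y * (x - y) \<le> sqrt (y\<^sup>2 + K) * \<bar>x - y\<bar>" .
  have "(sqrt (y\<^sup>2 + K) + \<bar>x - y\<bar>)\<^sup>2 = (y\<^sup>2 + K) + 2 * (sqrt (y\<^sup>2 + K) * \<bar>x - y\<bar>) + (x - y)\<^sup>2"
    using K by (simp add: power2_eq_square algebra_simps)
  then show "x\<^sup>2 + K \<le> (sqrt (y\<^sup>2 + K) + \<bar>x - y\<bar>)\<^sup>2" using *
    by (simp add: power2_eq_square algebra_simps)
qed

lemma g_decr: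
  fixes A s K c1 c2 :: real
  assumes A: "A > 0" and s: "s > 1" and K: "K \<ge> 0" and c: "c1 < c2"
  shows "- A * c2 + sqrt ((A / s)\<^sup>2 * c2\<^sup>2 + K) < - A * c1 + sqrt ((A / s)\<^sup>2 * c1\<^sup>2 + K)"
proof -
  have "sqrt (((A/s)*c2)\<^sup>2 + K) \<le> sqrt (((A/s)*c1)\<^sup>2 + K) + \<bar>(A/s)*c2 - (A/s)*c1\<bar>"
    by (rule sqrt_lip[OF K])
  moreover have "\<bar>(A/s)*c2 - (A/s)*c1\<bar> = (A/s) * (c2 - c1)"
  proof -
    have "(A/s)*c2 - (A/s)*c1 = (A/s) * (c2 - c1)" by (simp add: right_diff_distrib)
    moreover have "(A/s) * (c2 - c1) > 0" using A s c by simp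
    ultimately show ?thesis by (metis abs_of_pos)
  qed
  moreover have "(A/s) * (c2 - c1) < A * (c2 - c1)"
    using A s c by (intro mult_strict_right_mono) (auto simp: divide_less_eq)
  moreover have "(A / s)\<^sup>2 * c2\<^sup>2 = ((A/s)*c2)\<^sup>2" "(A / s)\<^sup>2 * c1\<^sup>2 = ((A/s)*c1)\<^sup>2"
    by (simp_all only: power_mult_distrib)
  ultimately show ?thesis by (simp only:) (simp add: algebra_simps)
qed



lemma sg2_pos: "(s::real) > 1 \<Longrightarrow> s\<^sup>2 - 1 > 0"
  by (simp add: power2_eq_square) (metis less_1_mult mult.commute)

lemma card_pos_real: "real CARD('n::finite) > 0"
  by simp

lemma w0_props:
  defines "r \<equiv> sqrt (real CARD('n::finite))"
  shows "norm (\<chi> i::'n. 1 / r) = 1" "S1 (\<chi> i::'n. 1 / r) = r" "L1 (\<chi> i::'n. 1 / r) = r"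
proof -
  have d: "real CARD('n) > 0" by simp
  have r: "r > 0" unfolding r_def using d by simp
  have rr: "r * r = real CARD('n)" unfolding r_def using d by simp
  have "(\<chi> i::'n. 1 / r) \<bullet> (\<chi> i::'n. 1 / r) = real CARD('n) * (1/r * (1/r))"
    by (simp add: inner_vec_def)
  also have "\<dots> = 1" using rr r by (simp add: field_simps)
  finally show "norm (\<chi> i::'n. 1 / r) = 1" by (simp add: norm_eq_sqrt_inner)
  have "S1 (\<chi> i::'n. 1 / r) = real CARD('n) * (1/r)" by (simp add: S1_def)
  also have "\<dots> = r" using rr r by (simp add: field_simps)
  finally show "S1 (\<chi> i::'n. 1 / r) = r" .
  have "L1 (\<chi> i::'n. 1 / r) = real CARD('n) * (1/r)" using r by (simp add: L1_def)
  also have "\<dots> = r" using rr r by (simp add: field_simps)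
  finally show "L1 (\<chi> i::'n. 1 / r) = r" .
qed

lemma w_bounds:
  fixes w :: "real^'n::finite"
  assumes w: "norm w = 1"
  shows "S1 w \<le> L1 w" "L1 w \<le> sqrt (real CARD('n))"
proof -
  show "S1 w \<le> L1 w" unfolding S1_def L1_def by (intro sum_mono) simp
  let ?a = "\<chi> i::'n. \<bar>w$i\<bar>" and ?o = "\<chi> i::'n. (1::real)"
  have "L1 w = ?a \<bullet> ?o" by (simp add: L1_def inner_vec_def)
  also have "\<dots> \<le> norm ?a * norm ?o" by (rule norm_cauchy_schwarz)
  also have "norm ?a = 1"
  proof -
    have "?a \<bullet> ?a = w \<bullet> w" by (simp add: inner_vec_def)
    then show ?thesis using w by (simp add: norm_eq_sqrt_inner)
  qed
  also have "norm ?o = sqrt (real CARD('n))"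
    by (simp add: norm_eq_sqrt_inner inner_vec_def)
  finally show "L1 w \<le> sqrt (real CARD('n))" by simp
qed

lemma nat_formula:
  fixes w :: "real^'n::finite"
  assumes eta: "eta > 0" and sg: "sg > 1" and alpha: "alpha \<ge> 1"
  and opt: "nat_opt eta sg alpha w b"
  shows "nat_err_cond eta sg alpha w b 1 =
     Phi (- (2 * sqrt (real CARD('n)) * sg / (sg\<^sup>2 - 1)) * ((1 + alpha) / 2 * eta)
        + sqrt (((2 * sqrt (real CARD('n)) * sg / (sg\<^sup>2 - 1)) / sg)\<^sup>2 * ((1 + alpha) / 2 * eta)\<^sup>2 + 2 * ln sg / (sg\<^sup>2 - 1)))"
proof -
  define r where "r = sqrt (real CARD('n))"
  define w0 where "w0 = (\<chi> i::'n. 1 / r)"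
  define P where "P w = eta * S1 w" for w :: "real^'n"
  define Q where "Q w = alpha * (eta * S1 w)" for w :: "real^'n"
  have sg0: "sg > 0" using sg by simp
  have w: "norm w = 1" using opt by (simp add: nat_opt_def)
  have R: "R_nat eta sg alpha w' b' = 1/2 * Phi ((- b' - P w')/sg) + 1/2 * Phi (b' - Q w')" if "norm w' = 1" for w' b'
    using that by (simp add: R_nat_def nat_err_1[OF sg0] nat_err_m1 P_def Q_def)
  have w0p: "norm w0 = 1" "P w0 = eta * r" "Q w0 = alpha * (eta * r)"
    using w0_props unfolding w0_def r_def P_def Q_def by auto
  have bnd: "P w' \<le> eta * r \<and> Q w' \<le> alpha * (eta * r)" if "norm w' = 1" for w'
  proof -
    have "S1 w' \<le> r" using w_bounds[OF that] unfolding r_def by linarith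
    then have "eta * S1 w' \<le> eta * r" using eta by (simp add: mult_left_mono)
    moreover then have "alpha * (eta * S1 w') \<le> alpha * (eta * r)" using alpha by (simp add: mult_left_mono)
    ultimately show ?thesis by (simp add: P_def Q_def)
  qed
  have opt': "Phi ((- b - P w)/sg) + Phi (b - Q w) \<le> Phi ((- b' - P w')/sg) + Phi (b' - Q w')" if "norm w' = 1" for w' b'
  proof -
    have "R_nat eta sg alpha w b \<le> R_nat eta sg alpha w' b'" using opt that unfolding nat_opt_def by blast
    then show ?thesis unfolding R[OF w] R[OF that] by linarith
  qed
  have "Phi ((- b - P w)/sg) = Phi (- (((eta * r + alpha * (eta * r)) * sg - sqrt((eta * r + alpha * (eta * r))\<^sup>2 + 2*(sg\<^sup>2-1)*ln sg))/(sg\<^sup>2-1)))"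
    by (rule opt_generic[OF sg w0p bnd w opt'])
  also have "eta * r + alpha * (eta * r) = 2 * r * ((1 + alpha) / 2 * eta)" by (simp add: algebra_simps)
  finally have "Phi ((- b - P w)/sg) = Phi (- (2 * r * sg / (sg\<^sup>2 - 1)) * ((1 + alpha) / 2 * eta)
        + sqrt (((2 * r * sg / (sg\<^sup>2 - 1)) / sg)\<^sup>2 * ((1 + alpha) / 2 * eta)\<^sup>2 + 2 * ln sg / (sg\<^sup>2 - 1)))"
    by (simp only: alg_form[OF sg])
  then show ?thesis using nat_err_1[OF sg0 w] by (simp add: P_def r_def)
qed

lemma rob_formula:
  fixes w :: "real^'n::finite"
  assumes eta: "eta > 0" and sg: "sg > 1" and alpha: "alpha \<ge> 1" and eps: "0 < eps" "eps < eta"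
  and opt: "rob_opt eta sg alpha eps w b"
  shows "rob_err_cond eta sg alpha eps w b 1 =
     Phi (- (2 * sqrt (real CARD('n)) * sg / (sg\<^sup>2 - 1)) * ((1 + alpha) / 2 * eta - eps)
        + sqrt (((2 * sqrt (real CARD('n)) * sg / (sg\<^sup>2 - 1)) / sg)\<^sup>2 * ((1 + alpha) / 2 * eta - eps)\<^sup>2 + 2 * ln sg / (sg\<^sup>2 - 1)))"
proof -
  define r where "r = sqrt (real CARD('n))"
  define w0 where "w0 = (\<chi> i::'n. 1 / r)"
  define P where "P w = eta * S1 w - eps * L1 w" for w :: "real^'n"
  define Q where "Q w = alpha * (eta * S1 w) - eps * L1 w" for w :: "real^'n"
  have sg0: "sg > 0" using sg by simp
  have eps0: "eps \<ge> 0" using eps by simp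
  have w: "norm w = 1" using opt by (simp add: rob_opt_def)
  have e1: "rob_err_cond eta sg alpha eps w' b' 1 = Phi ((- b' - P w')/sg)" if "norm w' = 1" for w' b'
  proof -
    have "rob_err_cond eta sg alpha eps w' b' 1 = Phi ((- b' + eps * L1 w' - eta * S1 w') / sg)"
      by (rule rob_err_1[OF sg0 that eps0])
    also have "- b' + eps * L1 w' - eta * S1 w' = - b' - P w'" by (simp add: P_def)
    finally show ?thesis .
  qed
  have em1: "rob_err_cond eta sg alpha eps w' b' (-1) = Phi (b' - Q w')" if "norm w' = 1" for w' b'
  proof -
    have "rob_err_cond eta sg alpha eps w' b' (-1) = Phi (b' + eps * L1 w' - alpha * (eta * S1 w'))"
      by (rule rob_err_m1[OF that eps0])
    also have "b' + eps * L1 w' - alpha * (eta * S1 w') = b' - Q w'" by (simp add: Q_def)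
    finally show ?thesis .
  qed
  have R: "R_rob eta sg alpha eps w' b' = 1/2 * Phi ((- b' - P w')/sg) + 1/2 * Phi (b' - Q w')" if "norm w' = 1" for w' b'
    using that by (simp add: R_rob_def e1 em1)
  have w0p: "norm w0 = 1" "P w0 = (eta - eps) * r" "Q w0 = (alpha * eta - eps) * r"
    unfolding w0_def r_def P_def Q_def by (simp_all add: w0_props[where 'n='n] algebra_simps)
  have bnd: "P w' \<le> (eta - eps) * r \<and> Q w' \<le> (alpha * eta - eps) * r" if "norm w' = 1" for w'
  proof -
    have SL: "S1 w' \<le> L1 w'" and Lr: "L1 w' \<le> r" using w_bounds[OF that] unfolding r_def by auto
    have ae: "alpha * eta \<ge> eta" using alpha eta by simp
    have "eta * S1 w' \<le> eta * L1 w'" using SL eta by (simp add: mult_left_mono)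
    moreover have "(eta - eps) * L1 w' \<le> (eta - eps) * r" using Lr eps by (simp add: mult_left_mono)
    moreover have "alpha * eta * S1 w' \<le> alpha * eta * L1 w'" using SL ae eta by (simp add: mult_left_mono)
    moreover have "(alpha * eta - eps) * L1 w' \<le> (alpha * eta - eps) * r" using Lr by (rule mult_left_mono) (use ae eps in linarith)
    ultimately show ?thesis by (simp add: P_def Q_def algebra_simps)
  qed
  have opt': "Phi ((- b - P w)/sg) + Phi (b - Q w) \<le> Phi ((- b' - P w')/sg) + Phi (b' - Q w')" if "norm w' = 1" for w' b'
  proof -
    have "R_rob eta sg alpha eps w b \<le> R_rob eta sg alpha eps w' b'" using opt that unfolding rob_opt_def by blast
    then show ?thesis unfolding R[OF w] R[OF that] by linarith
  qed
  have "Phi ((- b - P w)/sg) = Phi (- ((((eta - eps) * r + (alpha * eta - eps) * r) * sg - sqrt(((eta - eps) * r + (alpha * eta - eps) * r)\<^sup>2 + 2*(sg\<^sup>2-1)*ln sg))/(sg\<^sup>2-1)))"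
    by (rule opt_generic[OF sg w0p bnd w opt'])
  also have "(eta - eps) * r + (alpha * eta - eps) * r = 2 * r * ((1 + alpha) / 2 * eta - eps)" by (simp add: algebra_simps)
  finally have "Phi ((- b - P w)/sg) = Phi (- (2 * r * sg / (sg\<^sup>2 - 1)) * ((1 + alpha) / 2 * eta - eps)
        + sqrt (((2 * r * sg / (sg\<^sup>2 - 1)) / sg)\<^sup>2 * ((1 + alpha) / 2 * eta - eps)\<^sup>2 + 2 * ln sg / (sg\<^sup>2 - 1)))"
    by (simp only: alg_form[OF sg])
  then show ?thesis using e1[OF w] by (simp add: r_def)
qed

theorem theorem1:
  fixes eta sg alpha eps :: real
  assumes "eta > 0" and "sg > 1" and "alpha \<ge> 1" and "0 < eps" and "eps < eta"
  defines "A \<equiv> 2 * sqrt (real CARD('n)) * sg / (sg\<^sup>2 - 1)"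
  shows
    "(\<forall>(w::real^'n) b. nat_opt eta sg alpha w b \<longrightarrow>
        nat_err_cond eta sg alpha w b 1 =
          Phi (- A * ((1 + alpha) / 2 * eta)
               + sqrt ((A / sg)\<^sup>2 * ((1 + alpha) / 2 * eta)\<^sup>2 + 2 * ln sg / (sg\<^sup>2 - 1))))
   \<and> (\<forall>(w::real^'n) b. rob_opt eta sg alpha eps w b \<longrightarrow>
        rob_err_cond eta sg alpha eps w b 1 =
          Phi (- A * ((1 + alpha) / 2 * eta - eps)
               + sqrt ((A / sg)\<^sup>2 * ((1 + alpha) / 2 * eta - eps)\<^sup>2 + 2 * ln sg / (sg\<^sup>2 - 1))))
   \<and> (\<forall>a1 a2 (w1::real^'n) b1 (w2::real^'n) b2. 1 \<le> a1 \<longrightarrow> a1 < a2 \<longrightarrow>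
        nat_opt eta sg a1 w1 b1 \<longrightarrow> nat_opt eta sg a2 w2 b2 \<longrightarrow>
        nat_err_cond eta sg a2 w2 b2 1 < nat_err_cond eta sg a1 w1 b1 1)
   \<and> (\<forall>a1 a2 (w1::real^'n) b1 (w2::real^'n) b2. 1 \<le> a1 \<longrightarrow> a1 < a2 \<longrightarrow>
        rob_opt eta sg a1 eps w1 b1 \<longrightarrow> rob_opt eta sg a2 eps w2 b2 \<longrightarrow>
        rob_err_cond eta sg a2 eps w2 b2 1 < rob_err_cond eta sg a1 eps w1 b1 1)"
proof -
  have sg2: "sg\<^sup>2 - 1 > 0" using assms(2) by (rule sg2_pos)
  have A0: "A > 0" unfolding A_def using sg2 assms(2) by simp
  have K0: "2 * ln sg / (sg\<^sup>2 - 1) \<ge> 0" using sg2 assms(2) by simp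
  have P1: "\<forall>(w::real^'n) b. nat_opt eta sg alpha w b \<longrightarrow>
        nat_err_cond eta sg alpha w b 1 =
          Phi (- A * ((1 + alpha) / 2 * eta)
               + sqrt ((A / sg)\<^sup>2 * ((1 + alpha) / 2 * eta)\<^sup>2 + 2 * ln sg / (sg\<^sup>2 - 1)))"
    unfolding A_def using nat_formula[OF assms(1,2,3)] by blast
  have P2: "\<forall>(w::real^'n) b. rob_opt eta sg alpha eps w b \<longrightarrow>
        rob_err_cond eta sg alpha eps w b 1 =
          Phi (- A * ((1 + alpha) / 2 * eta - eps)
               + sqrt ((A / sg)\<^sup>2 * ((1 + alpha) / 2 * eta - eps)\<^sup>2 + 2 * ln sg / (sg\<^sup>2 - 1)))"
    unfolding A_def using rob_formula[OF assms(1,2,3,4,5)] by blast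
  have P3: "\<forall>a1 a2 (w1::real^'n) b1 (w2::real^'n) b2. 1 \<le> a1 \<longrightarrow> a1 < a2 \<longrightarrow>
        nat_opt eta sg a1 w1 b1 \<longrightarrow> nat_opt eta sg a2 w2 b2 \<longrightarrow>
        nat_err_cond eta sg a2 w2 b2 1 < nat_err_cond eta sg a1 w1 b1 1"
  proof (intro allI impI)
    fix a1 a2 :: real and w1 w2 :: "real^'n" and b1 b2
    assume a: "1 \<le> a1" "a1 < a2" and o1: "nat_opt eta sg a1 w1 b1" and o2: "nat_opt eta sg a2 w2 b2"
    have c: "(1 + a1) / 2 * eta < (1 + a2) / 2 * eta" using a assms(1) by (simp add: divide_strict_right_mono)
    have a2: "1 \<le> a2" using a by simp
    have e1: "nat_err_cond eta sg a1 w1 b1 1 = Phi (- A * ((1 + a1) / 2 * eta)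
               + sqrt ((A / sg)\<^sup>2 * ((1 + a1) / 2 * eta)\<^sup>2 + 2 * ln sg / (sg\<^sup>2 - 1)))"
      unfolding A_def by (rule nat_formula[OF assms(1,2) a(1) o1])
    have e2: "nat_err_cond eta sg a2 w2 b2 1 = Phi (- A * ((1 + a2) / 2 * eta)
               + sqrt ((A / sg)\<^sup>2 * ((1 + a2) / 2 * eta)\<^sup>2 + 2 * ln sg / (sg\<^sup>2 - 1)))"
      unfolding A_def by (rule nat_formula[OF assms(1,2) a2 o2])
    show "nat_err_cond eta sg a2 w2 b2 1 < nat_err_cond eta sg a1 w1 b1 1"
      unfolding e1 e2 Phi_less_iff by (rule g_decr[OF A0 assms(2) K0 c])
  qed
  have P4: "\<forall>a1 a2 (w1::real^'n) b1 (w2::real^'n) b2. 1 \<le> a1 \<longrightarrow> a1 < a2 \<longrightarrow>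
        rob_opt eta sg a1 eps w1 b1 \<longrightarrow> rob_opt eta sg a2 eps w2 b2 \<longrightarrow>
        rob_err_cond eta sg a2 eps w2 b2 1 < rob_err_cond eta sg a1 eps w1 b1 1"
  proof (intro allI impI)
    fix a1 a2 :: real and w1 w2 :: "real^'n" and b1 b2
    assume a: "1 \<le> a1" "a1 < a2" and o1: "rob_opt eta sg a1 eps w1 b1" and o2: "rob_opt eta sg a2 eps w2 b2"
    have a2: "1 \<le> a2" using a by simp
    have c: "(1 + a1) / 2 * eta - eps < (1 + a2) / 2 * eta - eps" using a assms(1) by (simp add: divide_strict_right_mono)
    have e1: "rob_err_cond eta sg a1 eps w1 b1 1 = Phi (- A * ((1 + a1) / 2 * eta - eps)
               + sqrt ((A / sg)\<^sup>2 * ((1 + a1) / 2 * eta - eps)\<^sup>2 + 2 * ln sg / (sg\<^sup>2 - 1)))"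
      unfolding A_def by (rule rob_formula[OF assms(1,2) a(1) assms(4,5) o1])
    have e2: "rob_err_cond eta sg a2 eps w2 b2 1 = Phi (- A * ((1 + a2) / 2 * eta - eps)
               + sqrt ((A / sg)\<^sup>2 * ((1 + a2) / 2 * eta - eps)\<^sup>2 + 2 * ln sg / (sg\<^sup>2 - 1)))"
      unfolding A_def by (rule rob_formula[OF assms(1,2) a2 assms(4,5) o2])
    show "rob_err_cond eta sg a2 eps w2 b2 1 < rob_err_cond eta sg a1 eps w1 b1 1"
      unfolding e1 e2 Phi_less_iff by (rule g_decr[OF A0 assms(2) K0 c])
  qed
  show ?thesis using P1 P2 P3 P4 by blast
qed


end
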